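(* Let $q\ge 1$, $d=2^q$, and let $\hat H$ be a Hermitian operator on $\mathbb{C}^d$ with eigenvalues $0<\lambda_0<\lambda_1\le\cdots\le\lambda_{d-1}\le 1$ and corresponding orthonormal eigenvectors $\ket{\lambda_0},\dots,\ket{\lambda_{d-1}}$. Let $\omega=\pi/4$ and define the unitary on $\mathbb{C}^2\otimes\mathbb{C}^d$ $$\hat U=\ket{0}\bra{0}\otimes e^{i\omega\hat H}+i\,\ket{1}\bra{1}\otimes e^{-i\omega\hat H}.$$ Let $\ket{\alpha}=\sum_{j=0}^{d-1}\gamma_j\ket{\lambda_j}$ be a unit vector in $\mathbb{C}^d$, let $\ket{+}=(\ket{0}+\ket{1})/\sqrt2$, $\ket{\Psi}=\ket{+}\otimes\ket{\alpha}$, $\hat R=\hat{\mathbb 1}-2\ket{\Psi}\bra{\Psi}$, and $\hat T=\hat R\hat U\hat R\hat U^\dagger$. For $k\in\{0,1\}$ let $p_k=\|(\bra{k}\otimes\hat{\mathbb 1})\hat T\ket{\Psi}\|^2$ and $\ket{\varphi_{\mathrm{out},k}}=(\bra{k}\otimes\hat{\mathbb 1})\hat T\ket{\Psi}/\sqrt{p_k}$. For a unit vector $\ket{\psi}\in\mathbb{C}^d$ write $\Gamma_{\ket\psi}=|\braket{\lambda_0}{\psi}|^2$. Define $\mathcal W=\bra{\Psi}\hat U\ket{\Psi}$, $\tilde\lambda_j=\frac{\pi}{4}(1-\lambda_j)$, $\chi=4|\mathcal W|^2-1$, $\xi_j=|\mathcal W|-\cos\tilde\lambda_j$, and $$c_\star=4\cos\tilde\lambda_0\,(4\cos^2\tilde\lambda_0-1)\,(\cos\tilde\lambda_1-\cos\tilde\lambda_0).$$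 Then $\mathcal W=|\mathcal W|e^{i\pi/4}$ with $|\mathcal W|=\sum_j|\gamma_j|^2\cos\tilde\lambda_j$, $c_\star>0$, and, assuming $0<\Gamma_{\ket{\alpha}}<1$, for each $k\in\{0,1\}$, $$\Gamma_{\ket{\varphi_{\mathrm{out},k}}}-\Gamma_{\ket{\alpha}}=4|\mathcal W|\,\chi\,\xi_0\,|\gamma_0|^2\ \ge\ c_\star\,\Gamma_{\ket{\alpha}}\bigl(1-\Gamma_{\ket{\alpha}}\bigr)>0.$$
   Context: All operators act on finite-dimensional complex Hilbert spaces; $\bra{k}\otimes\hat{\mathbb 1}$ denotes the partial inner product with the computational-basis state $\ket{k}$ of the first (ancilla) qubit. *)

theory Defs
  imports "HOL-Analysis.Analysis" "Jordan_Normal_Form.Matrix"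
begin

definition braket :: "complex vec \<Rightarrow> complex vec \<Rightarrow> complex" where
  "braket u v = (\<Sum>i<dim_vec v. cnj (u $ i) * v $ i)"

definition vnorm :: "complex vec \<Rightarrow> real" where
  "vnorm v = sqrt (\<Sum>i<dim_vec v. (cmod (v $ i))\<^sup>2)"

definition outer :: "complex vec \<Rightarrow> complex vec \<Rightarrow> complex mat" where
  "outer u v = mat (dim_vec u) (dim_vec v) (\<lambda>(i,j). u $ i * cnj (v $ j))"

definition adj :: "complex mat \<Rightarrow> complex mat" where
  "adj A = mat (dim_col A) (dim_row A) (\<lambda>(i,j). cnj (A $$ (j,i)))"

definition hermitian :: "complex mat \<Rightarrow> bool" where
  "hermitian A \<longleftrightarrow> adj A = A"

definition mexp :: "complex mat \<Rightarrow> complex mat" where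
  "mexp A = mat (dim_row A) (dim_col A) (\<lambda>(i,j). \<Sum>n. (A ^\<^sub>m n) $$ (i,j) / of_nat (fact n))"

text \<open>Kronecker (tensor) products; index of the first factor is the most significant.\<close>
definition kron_vec :: "complex vec \<Rightarrow> complex vec \<Rightarrow> complex vec" where
  "kron_vec a b = vec (dim_vec a * dim_vec b) (\<lambda>i. a $ (i div dim_vec b) * b $ (i mod dim_vec b))"

definition kron_mat :: "complex mat \<Rightarrow> complex mat \<Rightarrow> complex mat" where
  "kron_mat A B = mat (dim_row A * dim_row B) (dim_col A * dim_col B)
     (\<lambda>(i,j). A $$ (i div dim_row B, j div dim_col B) * B $$ (i mod dim_row B, j mod dim_col B))"

definition ket :: "nat \<Rightarrow> complex vec" where
  "ket k = unit_vec 2 k"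

definition partial_bra :: "nat \<Rightarrow> nat \<Rightarrow> complex vec \<Rightarrow> complex vec" where
  "partial_bra k d w = kron_mat (adj (mat_of_cols 2 [ket k])) (1\<^sub>m d) *\<^sub>v w"

end

theory Submission
  imports Defs "Jordan_Normal_Form.Determinant"
begin
unbundle no vec_syntax

locale eigsys =
  fixes d :: nat and H :: "complex mat" and lam :: "nat \<Rightarrow> real" and ev :: "nat \<Rightarrow> complex vec"
  assumes H: "H \<in> carrier_mat d d"
  and ev_dim: "\<And>j. j < d \<Longrightarrow> ev j \<in> carrier_vec d"
  and ev_eig: "\<And>j. j < d \<Longrightarrow> H *\<^sub>v ev j = of_real (lam j) \<cdot>\<^sub>v ev j"
  and ev_on: "\<And>i j. i < d \<Longrightarrow> j < d \<Longrightarrow> braket (ev i) (ev j) = (if i = j then 1 else 0)"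
begin

lemma ev_on': "i < d \<Longrightarrow> j < d \<Longrightarrow> (\<Sum>l<d. cnj (ev i $ l) * ev j $ l) = (if i = j then 1 else 0)"
  using ev_on[of i j] ev_dim[of j] by (simp add: braket_def)

lemma complete: "i < d \<Longrightarrow> k < d \<Longrightarrow> (\<Sum>j<d. ev j $ i * cnj (ev j $ k)) = (if i = k then 1 else 0)"
proof -
  assume ik: "i < d" "k < d"
  define V where "V = mat d d (\<lambda>(i,j). ev j $ i)"
  define V' where "V' = mat d d (\<lambda>(i,j). cnj (ev i $ j))"
  have V: "V \<in> carrier_mat d d" and V': "V' \<in> carrier_mat d d" by (auto simp: V_def V'_def)
  have "V' * V = 1\<^sub>m d"
  proof (rule eq_matI)
    fix a b assume ab: "a < dim_row (1\<^sub>m d)" "b < dim_col (1\<^sub>m d)"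
    have "(V' * V) $$ (a, b) = (\<Sum>l<d. cnj (ev a $ l) * ev b $ l)"
      using ab by (auto simp: V_def V'_def scalar_prod_def lessThan_atLeast0 intro!: sum.cong)
    also have "\<dots> = 1\<^sub>m d $$ (a, b)" using ab ev_on'[of a b] by auto
    finally show "(V' * V) $$ (a, b) = 1\<^sub>m d $$ (a, b)" .
  qed (auto simp: V_def V'_def)
  hence "V * V' = 1\<^sub>m d" by (rule mat_mult_left_right_inverse[OF V' V])
  hence "(V * V') $$ (i, k) = 1\<^sub>m d $$ (i, k)" by simp
  thus ?thesis using ik by (auto simp: V_def V'_def scalar_prod_def lessThan_atLeast0 intro!: sum.cong)
qed

lemma H_decomp: "i < d \<Longrightarrow> k < d \<Longrightarrow> H $$ (i, k) = (\<Sum>j<d. of_real (lam j) * ev j $ i * cnj (ev j $ k))"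
proof -
  assume ik: "i < d" "k < d"
  have "H $$ (i, k) = (\<Sum>l<d. H $$ (i, l) * (if l = k then 1 else 0))" using ik by (simp add: if_distrib cong: if_cong)
  also have "\<dots> = (\<Sum>l<d. H $$ (i, l) * (\<Sum>j<d. ev j $ l * cnj (ev j $ k)))"
    using ik by (intro sum.cong) (auto simp: complete)
  also have "\<dots> = (\<Sum>j<d. (\<Sum>l<d. H $$ (i, l) * ev j $ l) * cnj (ev j $ k))"
    by (simp add: sum_distrib_left sum_distrib_right mult.assoc)
       (rule sum.swap)
  also have "\<dots> = (\<Sum>j<d. of_real (lam j) * ev j $ i * cnj (ev j $ k))"
  proof (intro sum.cong refl)
    fix j assume j: "j \<in> {..<d}"
    have "(H *\<^sub>v ev j) $ i = (\<Sum>l<d. H $$ (i, l) * ev j $ l)"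
      using H ev_dim[of j] j ik by (auto simp: scalar_prod_def lessThan_atLeast0 intro!: sum.cong)
    moreover have "(H *\<^sub>v ev j) $ i = of_real (lam j) * ev j $ i"
      using ev_eig[of j] ev_dim[of j] j ik by auto
    ultimately show "(\<Sum>l<d. H $$ (i, l) * ev j $ l) * cnj (ev j $ k) = of_real (lam j) * ev j $ i * cnj (ev j $ k)" by simp
  qed
  finally show ?thesis .
qed

lemma sum3:
  "(\<Sum>l<d. (\<Sum>j<d. a j * cnj (ev j $ l)) * (\<Sum>m<d. b m * ev m $ l)) = (\<Sum>j<d. a j * b j)"
proof -
  have "(\<Sum>l<d. (\<Sum>j<d. a j * cnj (ev j $ l)) * (\<Sum>m<d. b m * ev m $ l))
      = (\<Sum>l<d. \<Sum>j<d. \<Sum>m<d. a j * b m * (cnj (ev j $ l) * ev m $ l))"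
    apply (rule sum.cong[OF refl])
    apply (subst sum_product)
    apply (intro sum.cong refl)
    by (simp add: mult_ac)
  also have "\<dots> = (\<Sum>j<d. \<Sum>l<d. \<Sum>m<d. a j * b m * (cnj (ev j $ l) * ev m $ l))"
    by (rule sum.swap)
  also have "\<dots> = (\<Sum>j<d. \<Sum>m<d. \<Sum>l<d. a j * b m * (cnj (ev j $ l) * ev m $ l))"
    by (rule sum.cong[OF refl], rule sum.swap)
  also have "\<dots> = (\<Sum>j<d. \<Sum>m<d. a j * b m * (\<Sum>l<d. cnj (ev j $ l) * ev m $ l))"
    by (simp add: sum_distrib_left)
  also have "\<dots> = (\<Sum>j<d. a j * b j)"
  proof (intro sum.cong refl)
    fix j assume j: "j \<in> {..<d}"
    have "(\<Sum>m<d. a j * b m * (\<Sum>l<d. cnj (ev j $ l) * ev m $ l)) = (\<Sum>m<d. if m = j then a j * b m else 0)"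
      using j by (intro sum.cong refl) (auto simp: ev_on')
    also have "\<dots> = a j * b j" using j by simp
    finally show "(\<Sum>m<d. a j * b m * (\<Sum>l<d. cnj (ev j $ l) * ev m $ l)) = a j * b j" .
  qed
  finally show ?thesis .
qed

lemma pow_decomp: "i < d \<Longrightarrow> k < d \<Longrightarrow>
  ((c \<cdot>\<^sub>m H) ^\<^sub>m n) $$ (i, k) = (\<Sum>j<d. (c * of_real (lam j)) ^ n * ev j $ i * cnj (ev j $ k))"
proof (induction n arbitrary: k)
  case 0
  then show ?case using H complete[of i k] by simp
next
  case (Suc n)
  have "((c \<cdot>\<^sub>m H) ^\<^sub>m Suc n) $$ (i, k) = (\<Sum>l<d. ((c \<cdot>\<^sub>m H) ^\<^sub>m n) $$ (i, l) * (c \<cdot>\<^sub>m H) $$ (l, k))"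
    using Suc.prems H by (auto simp: scalar_prod_def lessThan_atLeast0 intro!: sum.cong)
  also have "\<dots> = (\<Sum>l<d. (\<Sum>j<d. ((c * of_real (lam j)) ^ n * ev j $ i) * cnj (ev j $ l))
                         * (\<Sum>m<d. (c * of_real (lam m) * cnj (ev m $ k)) * ev m $ l))"
  proof (intro sum.cong refl)
    fix l assume l: "l \<in> {..<d}"
    have "(c \<cdot>\<^sub>m H) $$ (l, k) = c * H $$ (l, k)" using l Suc.prems H by auto
    also have "\<dots> = (\<Sum>m<d. (c * of_real (lam m) * cnj (ev m $ k)) * ev m $ l)"
      using l Suc.prems by (simp add: H_decomp sum_distrib_left mult_ac)
    finally have h1: "(c \<cdot>\<^sub>m H) $$ (l, k) = (\<Sum>m<d. (c * of_real (lam m) * cnj (ev m $ k)) * ev m $ l)" .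
    have h2: "((c \<cdot>\<^sub>m H) ^\<^sub>m n) $$ (i, l) = (\<Sum>j<d. ((c * of_real (lam j)) ^ n * ev j $ i) * cnj (ev j $ l))"
      using Suc.IH[of l] l Suc.prems by (simp add: mult_ac)
    show "((c \<cdot>\<^sub>m H) ^\<^sub>m n) $$ (i, l) * (c \<cdot>\<^sub>m H) $$ (l, k) = 
      (\<Sum>j<d. ((c * of_real (lam j)) ^ n * ev j $ i) * cnj (ev j $ l))
                         * (\<Sum>m<d. (c * of_real (lam m) * cnj (ev m $ k)) * ev m $ l)"
      by (simp only: h1 h2)
  qed
  also have "\<dots> = (\<Sum>j<d. ((c * of_real (lam j)) ^ n * ev j $ i) * (c * of_real (lam j) * cnj (ev j $ k)))"
    by (rule sum3)
  also have "\<dots> = (\<Sum>j<d. (c * of_real (lam j)) ^ Suc n * ev j $ i * cnj (ev j $ k))"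
    by (simp add: mult_ac)
  finally show ?case .
qed

lemma exp_sums_c: "(\<lambda>n. z ^ n / of_nat (fact n)) sums exp (z::complex)"
proof -
  have "(\<lambda>n. z ^ n /\<^sub>R fact n) sums exp z" by (rule exp_converges)
  moreover have "\<And>n. z ^ n /\<^sub>R fact n = z ^ n / of_nat (fact n)"
    by (simp add: scaleR_conv_of_real field_simps)
  ultimately show ?thesis by simp
qed

lemma mexp_decomp: "i < d \<Longrightarrow> k < d \<Longrightarrow>
  mexp (c \<cdot>\<^sub>m H) $$ (i, k) = (\<Sum>j<d. exp (c * of_real (lam j)) * ev j $ i * cnj (ev j $ k))"
proof -
  assume ik: "i < d" "k < d"
  have "(\<lambda>n. \<Sum>j<d. ((c * of_real (lam j)) ^ n / of_nat (fact n)) * (ev j $ i * cnj (ev j $ k)))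
        sums (\<Sum>j<d. exp (c * of_real (lam j)) * (ev j $ i * cnj (ev j $ k)))"
    by (intro sums_sum sums_mult2 exp_sums_c)
  moreover have "\<And>n. ((c \<cdot>\<^sub>m H) ^\<^sub>m n) $$ (i, k) / of_nat (fact n) = 
     (\<Sum>j<d. ((c * of_real (lam j)) ^ n / of_nat (fact n)) * (ev j $ i * cnj (ev j $ k)))"
    using ik by (simp add: pow_decomp sum_divide_distrib mult_ac)
  ultimately have "(\<lambda>n. ((c \<cdot>\<^sub>m H) ^\<^sub>m n) $$ (i, k) / of_nat (fact n)) sums
     (\<Sum>j<d. exp (c * of_real (lam j)) * ev j $ i * cnj (ev j $ k))" by (simp add: mult_ac)
  hence "(\<Sum>n. ((c \<cdot>\<^sub>m H) ^\<^sub>m n) $$ (i, k) / of_nat (fact n)) = 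
     (\<Sum>j<d. exp (c * of_real (lam j)) * ev j $ i * cnj (ev j $ k))" by (rule sums_unique[symmetric])
  thus ?thesis using ik H by (simp add: mexp_def)
qed

lemma mexp_carrier: "mexp (c \<cdot>\<^sub>m H) \<in> carrier_mat d d"
  using H by (simp add: mexp_def)

lemma braket_ev: "z \<in> carrier_vec d \<Longrightarrow> braket (ev j) z = (\<Sum>l<d. cnj (ev j $ l) * z $ l)"
  by (simp add: braket_def)

lemma expand: "z \<in> carrier_vec d \<Longrightarrow> i < d \<Longrightarrow> z $ i = (\<Sum>j<d. braket (ev j) z * ev j $ i)"
proof -
  assume z: "z \<in> carrier_vec d" and i: "i < d"
  have "(\<Sum>j<d. braket (ev j) z * ev j $ i) = (\<Sum>j<d. \<Sum>l<d. z $ l * (ev j $ i * cnj (ev j $ l)))"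
    using z by (simp add: braket_ev sum_distrib_right sum_distrib_left mult_ac)
  also have "\<dots> = (\<Sum>l<d. \<Sum>j<d. z $ l * (ev j $ i * cnj (ev j $ l)))" by (rule sum.swap)
  also have "\<dots> = (\<Sum>l<d. z $ l * (if i = l then 1 else 0))"
    using i by (simp add: sum_distrib_left[symmetric] complete)
  also have "\<dots> = z $ i" using i by (simp add: if_distrib cong: if_cong)
  finally show ?thesis by simp
qed

lemma delta_sum: "j < d \<Longrightarrow> (\<Sum>j'<d. (if j' = j then 1 else 0) * g j') = (g j :: complex)"
proof -
  assume j: "j < d"
  have "(\<Sum>j'<d. (if j' = j then 1 else 0) * g j') = (\<Sum>j'<d. if j' = j then g j' else 0)"
    by (rule sum.cong) auto
  also have "\<dots> = g j" using j by simp
  finally show ?thesis .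
qed

lemma coord_vec: "j < d \<Longrightarrow> braket (ev j) (vec d (\<lambda>i. \<Sum>m<d. f m * ev m $ i)) = f j"
proof -
  assume j: "j < d"
  have "braket (ev j) (vec d (\<lambda>i. \<Sum>m<d. f m * ev m $ i)) =
     (\<Sum>l<d. (\<Sum>j'<d. (if j' = j then 1 else 0) * cnj (ev j' $ l)) * (\<Sum>m<d. f m * ev m $ l))"
    using j by (simp add: braket_def delta_sum[OF j])
  also have "\<dots> = (\<Sum>j'<d. (if j' = j then 1 else 0) * f j')" by (rule sum3)
  also have "\<dots> = f j" using j by (rule delta_sum)
  finally show ?thesis .
qed

lemma braket_expand: "x \<in> carrier_vec d \<Longrightarrow> z \<in> carrier_vec d \<Longrightarrow>
   braket x z = (\<Sum>j<d. cnj (braket (ev j) x) * braket (ev j) z)"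
proof -
  assume x: "x \<in> carrier_vec d" and z: "z \<in> carrier_vec d"
  have "braket x z = (\<Sum>l<d. cnj (x $ l) * z $ l)" using z by (simp add: braket_def)
  also have "\<dots> = (\<Sum>l<d. (\<Sum>j<d. cnj (braket (ev j) x) * cnj (ev j $ l)) * (\<Sum>m<d. braket (ev m) z * ev m $ l))"
    apply (intro sum.cong refl)
    apply (subst expand[OF x], simp)
    apply (subst expand[OF z], simp)
    by simp
  also have "\<dots> = (\<Sum>j<d. cnj (braket (ev j) x) * braket (ev j) z)" by (rule sum3)
  finally show ?thesis .
qed

lemma vnorm_sq: "z \<in> carrier_vec d \<Longrightarrow> (vnorm z)\<^sup>2 = (\<Sum>j<d. (cmod (braket (ev j) z))\<^sup>2)"
proof -
  assume z: "z \<in> carrier_vec d"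
  have "(vnorm z)\<^sup>2 = (\<Sum>i<d. (cmod (z $ i))\<^sup>2)"
    using z by (simp add: vnorm_def sum_nonneg)
  hence "complex_of_real ((vnorm z)\<^sup>2) = (\<Sum>i<d. complex_of_real ((cmod (z $ i))\<^sup>2))"
    by simp
  also have "\<dots> = (\<Sum>i<d. cnj (z $ i) * z $ i)"
    by (intro sum.cong refl) (simp only: complex_norm_square mult.commute)
  also have "\<dots> = braket z z" using z
    by (simp add: braket_def)
  also have "\<dots> = (\<Sum>j<d. cnj (braket (ev j) z) * braket (ev j) z)"
    using z by (simp add: braket_expand)
  also have "\<dots> = (\<Sum>j<d. complex_of_real ((cmod (braket (ev j) z))\<^sup>2))"
    by (intro sum.cong refl) (simp only: complex_norm_square mult.commute)
  also have "\<dots> = complex_of_real (\<Sum>j<d. (cmod (braket (ev j) z))\<^sup>2)" by simp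
  finally show ?thesis using of_real_eq_iff by blast
qed

lemma mexp_vec: "x \<in> carrier_vec d \<Longrightarrow>
  mexp (c \<cdot>\<^sub>m H) *\<^sub>v x = vec d (\<lambda>i. \<Sum>m<d. (exp (c * of_real (lam m)) * braket (ev m) x) * ev m $ i)"
proof (rule eq_vecI)
  assume x: "x \<in> carrier_vec d"
  fix i assume "i < dim_vec (vec d (\<lambda>i. \<Sum>m<d. (exp (c * of_real (lam m)) * braket (ev m) x) * ev m $ i))"
  hence i: "i < d" by simp
  have "(mexp (c \<cdot>\<^sub>m H) *\<^sub>v x) $ i = (\<Sum>k<d. mexp (c \<cdot>\<^sub>m H) $$ (i, k) * x $ k)"
    using i x mexp_carrier[of c] by (auto simp: scalar_prod_def lessThan_atLeast0 intro!: sum.cong)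
  also have "\<dots> = (\<Sum>k<d. \<Sum>m<d. exp (c * of_real (lam m)) * ev m $ i * (cnj (ev m $ k) * x $ k))"
    using i by (simp add: mexp_decomp sum_distrib_right sum_distrib_left mult_ac)
  also have "\<dots> = (\<Sum>m<d. \<Sum>k<d. exp (c * of_real (lam m)) * ev m $ i * (cnj (ev m $ k) * x $ k))"
    by (rule sum.swap)
  also have "\<dots> = (\<Sum>m<d. (exp (c * of_real (lam m)) * braket (ev m) x) * ev m $ i)"
    using x by (simp add: braket_ev sum_distrib_left mult_ac)
  finally show "(mexp (c \<cdot>\<^sub>m H) *\<^sub>v x) $ i = vec d (\<lambda>i. \<Sum>m<d. (exp (c * of_real (lam m)) * braket (ev m) x) * ev m $ i) $ i"
    using i by simp
next
  show "dim_vec (mexp (c \<cdot>\<^sub>m H) *\<^sub>v x) = dim_vec (vec d (\<lambda>i. \<Sum>m<d. (exp (c * of_real (lam m)) * braket (ev m) x) * ev m $ i))"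
    using mexp_carrier[of c] by simp
qed

lemma co_mexp: "x \<in> carrier_vec d \<Longrightarrow> j < d \<Longrightarrow>
  braket (ev j) (mexp (c \<cdot>\<^sub>m H) *\<^sub>v x) = exp (c * of_real (lam j)) * braket (ev j) x"
  by (simp add: mexp_vec coord_vec)


definition vc :: "(nat \<Rightarrow> complex) \<Rightarrow> complex vec" where
  "vc f = vec d (\<lambda>i. \<Sum>m<d. f m * ev m $ i)"

lemma vc_carrier[simp]: "vc f \<in> carrier_vec d" by (simp add: vc_def)
lemma vc_dim[simp]: "dim_vec (vc f) = d" by (simp add: vc_def)

lemma co_vc: "j < d \<Longrightarrow> braket (ev j) (vc f) = f j"
  unfolding vc_def by (rule coord_vec)

lemma vc_expand: "z \<in> carrier_vec d \<Longrightarrow> z = vc (\<lambda>j. braket (ev j) z)"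
proof (rule eq_vecI)
  assume z: "z \<in> carrier_vec d"
  fix i assume "i < dim_vec (vc (\<lambda>j. braket (ev j) z))"
  hence i: "i < d" by simp
  show "z $ i = vc (\<lambda>j. braket (ev j) z) $ i" using expand[OF z i] i by (simp add: vc_def)
qed simp

lemma vc_cong: "(\<And>j. j < d \<Longrightarrow> f j = g j) \<Longrightarrow> vc f = vc g"
  unfolding vc_def by (intro eq_vecI) auto

lemma vc_add: "vc f + vc g = vc (\<lambda>j. f j + g j)"
  by (rule eq_vecI) (auto simp: vc_def sum.distrib algebra_simps)

lemma vc_minus: "vc f - vc g = vc (\<lambda>j. f j - g j)"
  by (rule eq_vecI) (auto simp: vc_def sum_subtractf algebra_simps)

lemma vc_smult: "c \<cdot>\<^sub>v vc f = vc (\<lambda>j. c * f j)"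
  by (rule eq_vecI) (auto simp: vc_def sum_distrib_left algebra_simps)

lemma mexp_vc: "mexp (c \<cdot>\<^sub>m H) *\<^sub>v vc f = vc (\<lambda>j. exp (c * of_real (lam j)) * f j)"
proof -
  have "mexp (c \<cdot>\<^sub>m H) *\<^sub>v vc f = vc (\<lambda>m. exp (c * of_real (lam m)) * braket (ev m) (vc f))"
    by (simp add: mexp_vec vc_def[symmetric])
  also have "\<dots> = vc (\<lambda>j. exp (c * of_real (lam j)) * f j)"
    by (rule vc_cong) (simp add: co_vc)
  finally show ?thesis .
qed

lemma braket_vc: "braket (vc f) (vc g) = (\<Sum>j<d. cnj (f j) * g j)"
  by (simp add: braket_expand co_vc)

lemma adj_mexp: "adj (mexp (c \<cdot>\<^sub>m H)) = mexp (cnj c \<cdot>\<^sub>m H)"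
proof (rule eq_matI)
  fix i k assume "i < dim_row (mexp (cnj c \<cdot>\<^sub>m H))" "k < dim_col (mexp (cnj c \<cdot>\<^sub>m H))"
  hence ik: "i < d" "k < d" using mexp_carrier[of "cnj c"] by auto
  have "adj (mexp (c \<cdot>\<^sub>m H)) $$ (i, k) = cnj (mexp (c \<cdot>\<^sub>m H) $$ (k, i))"
    using ik mexp_carrier[of c] by (simp add: adj_def)
  also have "\<dots> = (\<Sum>j<d. exp (cnj c * of_real (lam j)) * ev j $ i * cnj (ev j $ k))"
    using ik by (simp add: mexp_decomp exp_cnj mult_ac)
  also have "\<dots> = mexp (cnj c \<cdot>\<^sub>m H) $$ (i, k)" using ik by (simp add: mexp_decomp)
  finally show "adj (mexp (c \<cdot>\<^sub>m H)) $$ (i, k) = mexp (cnj c \<cdot>\<^sub>m H) $$ (i, k)" .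
qed (insert mexp_carrier[of c] mexp_carrier[of "cnj c"], auto simp: adj_def)

end

lemma sum_split2: "(\<Sum>j<2*(d::nat). f j) = (\<Sum>j<d. f j) + (\<Sum>j<d. f (j + d))"
proof -
  have "(\<Sum>j<2*d. f j) = sum f {0..<d} + sum f {d..<2*d}"
    by (simp add: lessThan_atLeast0 sum.atLeastLessThan_concat)
  also have "sum f {d..<2*d} = sum f {0+d..<d+d}" by (simp add: mult_2)
  also have "\<dots> = (\<Sum>j<d. f (j + d))" by (simp only: sum.shift_bounds_nat_ivl lessThan_atLeast0)
  finally show ?thesis by (simp add: lessThan_atLeast0)
qed

definition stack :: "nat \<Rightarrow> complex vec \<Rightarrow> complex vec \<Rightarrow> complex vec" where
  "stack d x y = vec (2*d) (\<lambda>i. if i < d then x $ i else y $ (i - d))"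

lemma stack_carrier[simp]: "stack d x y \<in> carrier_vec (2*d)"
  by (simp add: stack_def)

lemma stack_dim[simp]: "dim_vec (stack d x y) = 2*d"
  by (simp add: stack_def)

lemma div_hi: "d \<le> i \<Longrightarrow> i < 2*d \<Longrightarrow> i div d = (1::nat)"
proof -
  assume a: "d \<le> i" "i < 2*d"
  hence "0 < d" by simp
  have "i = (i - d) + 1 * d" using a by simp
  hence "i div d = ((i - d) + 1 * d) div d" by simp
  also have "\<dots> = (i - d) div d + 1" using \<open>0 < d\<close> by (simp only: div_mult_self1)
  also have "(i - d) div d = 0" using a by simp
  finally show ?thesis by simp
qed

lemma mod_hi: "d \<le> i \<Longrightarrow> i < 2*d \<Longrightarrow> i mod d = i - (d::nat)"
proof -
  assume a: "d \<le> i" "i < 2*d"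
  have "i mod d = i - (i div d) * d" by (simp add: minus_div_mult_eq_mod[symmetric])
  thus ?thesis using div_hi[OF a] by simp
qed

lemma blk_mult:
  assumes M: "M \<in> carrier_mat (2*d) (2*d)" and A: "A \<in> carrier_mat d d" and B: "B \<in> carrier_mat d d"
  and Me: "\<And>i j. i < 2*d \<Longrightarrow> j < 2*d \<Longrightarrow> M $$ (i,j) =
     (if i < d \<and> j < d then A $$ (i,j) else if d \<le> i \<and> d \<le> j then c * B $$ (i-d,j-d) else 0)"
  and x: "x \<in> carrier_vec d" and y: "y \<in> carrier_vec d"
  shows "M *\<^sub>v stack d x y = stack d (A *\<^sub>v x) (c \<cdot>\<^sub>v (B *\<^sub>v y))"
proof (rule eq_vecI)
  show "dim_vec (M *\<^sub>v stack d x y) = dim_vec (stack d (A *\<^sub>v x) (c \<cdot>\<^sub>v (B *\<^sub>v y)))"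
    using M by simp
  fix i assume "i < dim_vec (stack d (A *\<^sub>v x) (c \<cdot>\<^sub>v (B *\<^sub>v y)))"
  hence i: "i < 2*d" by simp
  have "(M *\<^sub>v stack d x y) $ i = (\<Sum>j<2*d. M $$ (i,j) * stack d x y $ j)"
    using M i by (auto simp: scalar_prod_def lessThan_atLeast0 intro!: sum.cong)
  also have "\<dots> = (\<Sum>j<d. M $$ (i,j) * x $ j) + (\<Sum>j<d. M $$ (i,j+d) * y $ j)"
    by (simp add: sum_split2 stack_def)
  also have "\<dots> = stack d (A *\<^sub>v x) (c \<cdot>\<^sub>v (B *\<^sub>v y)) $ i"
  proof (cases "i < d")
    case True
    have "(\<Sum>j<d. M $$ (i,j) * x $ j) = (\<Sum>j<d. A $$ (i,j) * x $ j)"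
      using True by (intro sum.cong refl) (simp add: Me)
    moreover have "(\<Sum>j<d. M $$ (i,j+d) * y $ j) = 0"
      using True by (intro sum.neutral) (simp add: Me)
    moreover have "(A *\<^sub>v x) $ i = (\<Sum>j<d. A $$ (i,j) * x $ j)"
      using A x True by (auto simp: scalar_prod_def lessThan_atLeast0 intro!: sum.cong)
    ultimately show ?thesis using True A by (simp add: stack_def)
  next
    case False
    have "(\<Sum>j<d. M $$ (i,j) * x $ j) = 0"
      using False by (intro sum.neutral) (simp add: Me i)
    moreover have "(\<Sum>j<d. M $$ (i,j+d) * y $ j) = c * (\<Sum>j<d. B $$ (i-d,j) * y $ j)"
      using False i by (simp add: sum_distrib_left Me mult.assoc)
    moreover have "(B *\<^sub>v y) $ (i-d) = (\<Sum>j<d. B $$ (i-d,j) * y $ j)"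
      using B y False i by (auto simp: scalar_prod_def lessThan_atLeast0 intro!: sum.cong)
    ultimately show ?thesis using False i B by (simp add: stack_def)
  qed
  finally show "(M *\<^sub>v stack d x y) $ i = stack d (A *\<^sub>v x) (c \<cdot>\<^sub>v (B *\<^sub>v y)) $ i" .
qed

lemma ket_idx: "j < 2 \<Longrightarrow> ket k $ j = (if j = k then 1 else 0)"
  by (simp add: ket_def unit_vec_def)

lemma U_entry:
  assumes A: "A \<in> carrier_mat d d" and B: "B \<in> carrier_mat d d"
  and M: "M = kron_mat (outer (ket 0) (ket 0)) A + c \<cdot>\<^sub>m kron_mat (outer (ket 1) (ket 1)) B"
  shows "M \<in> carrier_mat (2*d) (2*d)"
   and "\<And>i j. i < 2*d \<Longrightarrow> j < 2*d \<Longrightarrow> M $$ (i,j) =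
     (if i < d \<and> j < d then A $$ (i,j) else if d \<le> i \<and> d \<le> j then c * B $$ (i-d,j-d) else 0)"
   and "adj M \<in> carrier_mat (2*d) (2*d)"
   and "\<And>i j. i < 2*d \<Longrightarrow> j < 2*d \<Longrightarrow> adj M $$ (i,j) =
     (if i < d \<and> j < d then adj A $$ (i,j) else if d \<le> i \<and> d \<le> j then cnj c * adj B $$ (i-d,j-d) else 0)"
proof -
  show Mc: "M \<in> carrier_mat (2*d) (2*d)" using A B
    by (simp add: M kron_mat_def outer_def ket_def)
  show Me: "\<And>i j. i < 2*d \<Longrightarrow> j < 2*d \<Longrightarrow> M $$ (i,j) =
     (if i < d \<and> j < d then A $$ (i,j) else if d \<le> i \<and> d \<le> j then c * B $$ (i-d,j-d) else 0)"
  proof -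
    fix i j assume i: "i < 2*d" and j: "j < 2*d"
    have idiv: "i div d < 2" "j div d < 2" using i j
      by (simp_all add: less_mult_imp_div_less mult.commute)
    show "M $$ (i,j) =
     (if i < d \<and> j < d then A $$ (i,j) else if d \<le> i \<and> d \<le> j then c * B $$ (i-d,j-d) else 0)"
    proof -
      have e: "M $$ (i,j) = ket 0 $ (i div d) * cnj (ket 0 $ (j div d)) * A $$ (i mod d, j mod d)
         + c * (ket 1 $ (i div d) * cnj (ket 1 $ (j div d)) * B $$ (i mod d, j mod d))"
        using A B i j idiv by (simp add: M kron_mat_def outer_def ket_def)
      show ?thesis
      proof (cases "i < d")
        case True
        note ti = True
        show ?thesis
        proof (cases "j < d")
          case True
          then show ?thesis using ti e by (simp add: ket_idx)
        next
          case False
          then show ?thesis using ti e j by (simp add: ket_idx div_hi mod_hi)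
        qed
      next
        case False
        note fi = False
        show ?thesis
        proof (cases "j < d")
          case True
          then show ?thesis using fi e i by (simp add: ket_idx div_hi mod_hi)
        next
          case False
          then show ?thesis using fi e i j by (simp add: ket_idx div_hi mod_hi)
        qed
      qed
    qed
  qed
  show "adj M \<in> carrier_mat (2*d) (2*d)" using Mc by (simp add: adj_def)
  fix i j assume i: "i < 2*d" and j: "j < 2*d"
  show "adj M $$ (i,j) =
     (if i < d \<and> j < d then adj A $$ (i,j) else if d \<le> i \<and> d \<le> j then cnj c * adj B $$ (i-d,j-d) else 0)"
    using Mc A B i j Me[OF j i] by (auto simp: adj_def)
qed


lemma delta_sum2: "i < (d::nat) \<Longrightarrow> (\<Sum>j<d. (if i = j then (1::complex) else 0) * g j) = g i"
proof -
  assume i: "i < d"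
  have "(\<Sum>j<d. (if i = j then (1::complex) else 0) * g j) = (\<Sum>j<d. if j = i then g j else 0)"
    by (rule sum.cong) auto
  also have "\<dots> = g i" using i by simp
  finally show ?thesis .
qed

lemma partial_bra_stack:
  assumes k: "k = 0 \<or> k = 1" and x: "x \<in> carrier_vec d" and y: "y \<in> carrier_vec d"
  shows "partial_bra k d (stack d x y) = (if k = 0 then x else y)"
proof (rule eq_vecI)
  have dimK: "dim_row (kron_mat (adj (mat_of_cols 2 [ket k])) (1\<^sub>m d)) = d"
    "dim_col (kron_mat (adj (mat_of_cols 2 [ket k])) (1\<^sub>m d)) = 2 * d"
    by (simp_all add: kron_mat_def adj_def)
  show "dim_vec (partial_bra k d (stack d x y)) = dim_vec (if k = 0 then x else y)"
    using x y dimK by (simp add: partial_bra_def)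
  fix i assume "i < dim_vec (if k = 0 then x else y)"
  hence i: "i < d" using x y by (simp split: if_splits)
  hence d0: "0 < d" by simp
  have "partial_bra k d (stack d x y) $ i =
     (\<Sum>j<2*d. kron_mat (adj (mat_of_cols 2 [ket k])) (1\<^sub>m d) $$ (i, j) * stack d x y $ j)"
    using i dimK by (auto simp: partial_bra_def scalar_prod_def lessThan_atLeast0 intro!: sum.cong)
  also have "\<dots> = (\<Sum>j<2*d. cnj (ket k $ (j div d)) * (if i = j mod d then 1 else 0) * stack d x y $ j)"
  proof (intro sum.cong refl)
    fix j assume "j \<in> {..<2*d}"
    hence j: "j < 2*d" by simp
    have "j div d < 2" using j by (simp add: less_mult_imp_div_less mult.commute)
    thus "kron_mat (adj (mat_of_cols 2 [ket k])) (1\<^sub>m d) $$ (i, j) * stack d x y $ j =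
       cnj (ket k $ (j div d)) * (if i = j mod d then 1 else 0) * stack d x y $ j"
      using i j d0 by (simp add: kron_mat_def adj_def mat_of_cols_def ket_def)
  qed
  also have "\<dots> = (\<Sum>j<d. cnj (ket k $ 0) * (if i = j then 1 else 0) * x $ j)
                 + (\<Sum>j<d. cnj (ket k $ 1) * (if i = j then 1 else 0) * y $ j)"
    using d0 by (simp add: sum_split2 stack_def)
  also have "\<dots> = (if k = 0 then x else y) $ i"
    using i k by (auto simp: ket_idx delta_sum2)
  finally show "partial_bra k d (stack d x y) $ i = (if k = 0 then x else y) $ i" .
qed

lemma kron_ketp:
  assumes a: "a \<in> carrier_vec d"
  shows "kron_vec ((1 / of_real (sqrt 2)) \<cdot>\<^sub>v (ket 0 + ket 1)) a =
    stack d ((1 / of_real (sqrt 2)) \<cdot>\<^sub>v a) ((1 / of_real (sqrt 2)) \<cdot>\<^sub>v a)"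
proof (rule eq_vecI)
  show "dim_vec (kron_vec ((1 / of_real (sqrt 2)) \<cdot>\<^sub>v (ket 0 + ket 1)) a) =
    dim_vec (stack d ((1 / of_real (sqrt 2)) \<cdot>\<^sub>v a) ((1 / of_real (sqrt 2)) \<cdot>\<^sub>v a))"
    using a by (simp add: kron_vec_def ket_def)
  fix i assume "i < dim_vec (stack d ((1 / of_real (sqrt 2)) \<cdot>\<^sub>v a) ((1 / of_real (sqrt 2)) \<cdot>\<^sub>v a))"
  hence i: "i < 2*d" by simp
  have "i div d < 2" using i by (simp add: less_mult_imp_div_less mult.commute)
  moreover have "i < d \<Longrightarrow> i div d = 0" by simp
  ultimately show "kron_vec ((1 / of_real (sqrt 2)) \<cdot>\<^sub>v (ket 0 + ket 1)) a $ i =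
    stack d ((1 / of_real (sqrt 2)) \<cdot>\<^sub>v a) ((1 / of_real (sqrt 2)) \<cdot>\<^sub>v a) $ i"
    using i a by (auto simp: kron_vec_def stack_def ket_def div_hi mod_hi)
qed

lemma R_mult:
  assumes P: "P \<in> carrier_vec n" and w: "w \<in> carrier_vec n"
  shows "(1\<^sub>m n - 2 \<cdot>\<^sub>m outer P P) *\<^sub>v w = w - (2 * braket P w) \<cdot>\<^sub>v P"
proof -
  have o: "outer P P \<in> carrier_mat n n" using P by (simp add: outer_def)
  have "(1\<^sub>m n - 2 \<cdot>\<^sub>m outer P P) *\<^sub>v w = 1\<^sub>m n *\<^sub>v w - (2 \<cdot>\<^sub>m outer P P) *\<^sub>v w"
    using o w by (intro minus_mult_distrib_mat_vec) auto
  also have "(2 \<cdot>\<^sub>m outer P P) *\<^sub>v w = (2 * braket P w) \<cdot>\<^sub>v P"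
  proof (rule eq_vecI)
    fix i assume "i < dim_vec ((2 * braket P w) \<cdot>\<^sub>v P)"
    hence i: "i < n" using P by simp
    have "((2 \<cdot>\<^sub>m outer P P) *\<^sub>v w) $ i = (\<Sum>j<n. 2 * (P $ i * cnj (P $ j)) * w $ j)"
      using i P w o by (auto simp: outer_def scalar_prod_def lessThan_atLeast0 intro!: sum.cong)
    also have "\<dots> = ((2 * braket P w) \<cdot>\<^sub>v P) $ i"
      using i P w by (simp add: braket_def sum_distrib_left mult_ac)
    finally show "((2 \<cdot>\<^sub>m outer P P) *\<^sub>v w) $ i = ((2 * braket P w) \<cdot>\<^sub>v P) $ i" .
  qed (insert o P, auto)
  finally show ?thesis using w by simp
qed

lemma braket_stack:
  assumes "x \<in> carrier_vec d" "y \<in> carrier_vec d" "u \<in> carrier_vec d" "v \<in> carrier_vec d"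
  shows "braket (stack d x y) (stack d u v) = braket x u + braket y v"
  using assms by (simp add: braket_def sum_split2 stack_def)

lemma stack_minus:
  assumes "x \<in> carrier_vec d" "y \<in> carrier_vec d" "u \<in> carrier_vec d" "v \<in> carrier_vec d"
  shows "stack d x y - stack d u v = stack d (x - u) (y - v)"
  using assms by (intro eq_vecI) (auto simp: stack_def)

lemma stack_smult: "x \<in> carrier_vec d \<Longrightarrow> y \<in> carrier_vec d \<Longrightarrow>
  c \<cdot>\<^sub>v stack d x y = stack d (c \<cdot>\<^sub>v x) (c \<cdot>\<^sub>v y)"
  by (intro eq_vecI) (auto simp: stack_def)



context eigsys begin

lemma main_vec:
  assumes U: "U = kron_mat (outer (ket 0) (ket 0)) (mexp (c1 \<cdot>\<^sub>m H)) + \<i> \<cdot>\<^sub>m kron_mat (outer (ket 1) (ket 1)) (mexp (c2 \<cdot>\<^sub>m H))"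
  and c2: "c2 = cnj c1"
  and Psi: "\<Psi> = stack d (vc g) (vc g)"
  and R: "R = 1\<^sub>m (2*d) - 2 \<cdot>\<^sub>m outer \<Psi> \<Psi>"
  and T: "T = R * U * R * adj U"
  and a: "a = (\<lambda>j. exp (c1 * of_real (lam j)))"
  and b: "b = (\<lambda>j. exp (c2 * of_real (lam j)))"
  and w: "w = (\<Sum>j<d. cnj (g j) * (b j * g j)) + (\<Sum>j<d. cnj (g j) * (-\<i> * (a j * g j)))"
  and f1: "f1 = (\<lambda>j. b j * g j - 2 * w * g j)"
  and f2: "f2 = (\<lambda>j. -\<i> * (a j * g j) - 2 * w * g j)"
  and be: "\<beta> = (\<Sum>j<d. cnj (g j) * (a j * f1 j)) + (\<Sum>j<d. cnj (g j) * (\<i> * (b j * f2 j)))"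
  shows "braket \<Psi> (U *\<^sub>v \<Psi>) = (\<Sum>j<d. cnj (g j) * (a j * g j)) + (\<Sum>j<d. cnj (g j) * (\<i> * (b j * g j)))"
   and "partial_bra 0 d (T *\<^sub>v \<Psi>) = vc (\<lambda>j. a j * f1 j - 2 * \<beta> * g j)"
   and "partial_bra 1 d (T *\<^sub>v \<Psi>) = vc (\<lambda>j. \<i> * (b j * f2 j) - 2 * \<beta> * g j)"
proof -
  define E1 where "E1 = mexp (c1 \<cdot>\<^sub>m H)"
  define E2 where "E2 = mexp (c2 \<cdot>\<^sub>m H)"
  have E1c: "E1 \<in> carrier_mat d d" and E2c: "E2 \<in> carrier_mat d d"
    by (simp_all add: E1_def E2_def mexp_carrier)
  have adj1: "adj E1 = E2" by (simp add: E1_def E2_def adj_mexp c2)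
  have adj2: "adj E2 = E1" by (simp add: E1_def E2_def adj_mexp c2)
  have UE: "U = kron_mat (outer (ket 0) (ket 0)) E1 + \<i> \<cdot>\<^sub>m kron_mat (outer (ket 1) (ket 1)) E2"
    by (simp add: U E1_def E2_def)
  note Ue = U_entry[OF E1c E2c UE]
  have Uc: "U \<in> carrier_mat (2*d) (2*d)" and Uac: "adj U \<in> carrier_mat (2*d) (2*d)"
    using Ue by auto
  have Umult: "\<And>x y. x \<in> carrier_vec d \<Longrightarrow> y \<in> carrier_vec d \<Longrightarrow>
      U *\<^sub>v stack d x y = stack d (E1 *\<^sub>v x) (\<i> \<cdot>\<^sub>v (E2 *\<^sub>v y))"
    by (rule blk_mult[OF Uc E1c E2c]) (use Ue in auto)
  have Uamult: "\<And>x y. x \<in> carrier_vec d \<Longrightarrow> y \<in> carrier_vec d \<Longrightarrow>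
      adj U *\<^sub>v stack d x y = stack d (E2 *\<^sub>v x) (-\<i> \<cdot>\<^sub>v (E1 *\<^sub>v y))"
    using blk_mult[OF Uac, of "adj E1" "adj E2" "cnj \<i>"] Ue E1c E2c
    by (simp add: adj1 adj2)
  have E1vc: "\<And>f. E1 *\<^sub>v vc f = vc (\<lambda>j. a j * f j)" by (simp add: E1_def mexp_vc a)
  have E2vc: "\<And>f. E2 *\<^sub>v vc f = vc (\<lambda>j. b j * f j)" by (simp add: E2_def mexp_vc b)
  have Psic: "\<Psi> \<in> carrier_vec (2*d)" by (simp add: Psi)
  have Rmult: "\<And>x. x \<in> carrier_vec (2*d) \<Longrightarrow> R *\<^sub>v x = x - (2 * braket \<Psi> x) \<cdot>\<^sub>v \<Psi>"
    unfolding R by (rule R_mult[OF Psic])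
  have Rc: "R \<in> carrier_mat (2*d) (2*d)" using Psic unfolding R carrier_mat_def by (simp add: outer_def)
  have x1: "adj U *\<^sub>v \<Psi> = stack d (vc (\<lambda>j. b j * g j)) (vc (\<lambda>j. -\<i> * (a j * g j)))"
    by (simp add: Psi Uamult E1vc E2vc vc_smult)
  have w': "braket \<Psi> (adj U *\<^sub>v \<Psi>) = w"
    unfolding x1 by (simp add: Psi braket_stack braket_vc w)
  have "R *\<^sub>v (adj U *\<^sub>v \<Psi>) = adj U *\<^sub>v \<Psi> - (2 * w) \<cdot>\<^sub>v \<Psi>"
    using Rmult[of "adj U *\<^sub>v \<Psi>"] Uac Psic w' by simp
  also have "\<dots> = stack d (vc f1) (vc f2)"
    unfolding x1 unfolding Psi by (simp add: stack_smult stack_minus vc_smult vc_minus f1 f2 mult.assoc)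
  finally have x2: "R *\<^sub>v (adj U *\<^sub>v \<Psi>) = stack d (vc f1) (vc f2)" .
  have x3: "U *\<^sub>v (R *\<^sub>v (adj U *\<^sub>v \<Psi>)) = stack d (vc (\<lambda>j. a j * f1 j)) (vc (\<lambda>j. \<i> * (b j * f2 j)))"
    by (simp add: x2 Umult E1vc E2vc vc_smult)
  have b3: "braket \<Psi> (U *\<^sub>v (R *\<^sub>v (adj U *\<^sub>v \<Psi>))) = \<beta>"
    unfolding x3 by (simp add: Psi braket_stack braket_vc be)
  have "R *\<^sub>v (U *\<^sub>v (R *\<^sub>v (adj U *\<^sub>v \<Psi>))) = 
     U *\<^sub>v (R *\<^sub>v (adj U *\<^sub>v \<Psi>)) - (2 * \<beta>) \<cdot>\<^sub>v \<Psi>"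
    using Rmult[of "U *\<^sub>v (R *\<^sub>v (adj U *\<^sub>v \<Psi>))"] Uc Rc Uac Psic b3 by simp
  also have "\<dots> = 
      stack d (vc (\<lambda>j. a j * f1 j - 2 * \<beta> * g j)) (vc (\<lambda>j. \<i> * (b j * f2 j) - 2 * \<beta> * g j))"
    unfolding x3 unfolding Psi by (simp add: stack_smult stack_minus vc_smult vc_minus mult.assoc)
  finally have x4: "R *\<^sub>v (U *\<^sub>v (R *\<^sub>v (adj U *\<^sub>v \<Psi>))) =
      stack d (vc (\<lambda>j. a j * f1 j - 2 * \<beta> * g j)) (vc (\<lambda>j. \<i> * (b j * f2 j) - 2 * \<beta> * g j))" .
  have cRU: "R * U \<in> carrier_mat (2*d) (2*d)" using Rc Uc by simp
  have cRUR: "R * U * R \<in> carrier_mat (2*d) (2*d)" using cRU Rc by simp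
  have "T *\<^sub>v \<Psi> = (R * U * R) *\<^sub>v (adj U *\<^sub>v \<Psi>)"
    unfolding T using cRUR Uac Psic by (rule assoc_mult_mat_vec)
  also have "\<dots> = (R * U) *\<^sub>v (R *\<^sub>v (adj U *\<^sub>v \<Psi>))"
    using cRU Rc Uac Psic by (intro assoc_mult_mat_vec) auto
  also have "\<dots> = R *\<^sub>v (U *\<^sub>v (R *\<^sub>v (adj U *\<^sub>v \<Psi>)))"
    using Uc Rc Uac Psic by (intro assoc_mult_mat_vec) auto
  finally have TP: "T *\<^sub>v \<Psi> = R *\<^sub>v (U *\<^sub>v (R *\<^sub>v (adj U *\<^sub>v \<Psi>)))" .
  show "braket \<Psi> (U *\<^sub>v \<Psi>) = (\<Sum>j<d. cnj (g j) * (a j * g j)) + (\<Sum>j<d. cnj (g j) * (\<i> * (b j * g j)))"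
    by (simp add: Psi Umult E1vc E2vc vc_smult braket_stack braket_vc)
  show "partial_bra 0 d (T *\<^sub>v \<Psi>) = vc (\<lambda>j. a j * f1 j - 2 * \<beta> * g j)"
    by (simp add: TP x4 partial_bra_stack)
  show "partial_bra 1 d (T *\<^sub>v \<Psi>) = vc (\<lambda>j. \<i> * (b j * f2 j) - 2 * \<beta> * g j)"
    by (simp add: TP x4 partial_bra_stack)
qed

end

lemma trig1: "cis t + \<i> * cis (-t) = 2 * cis (pi/4) * complex_of_real (cos (pi/4 - t))"
  by (simp add: complex_eq_iff cos_diff sin_diff cos_45 sin_45 algebra_simps)

lemma trig2: "cis (-t) - \<i> * cis t = 2 * cis (-(pi/4)) * complex_of_real (cos (pi/4 - t))"
  by (simp add: complex_eq_iff cos_diff sin_diff cos_45 sin_45 algebra_simps)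

lemma trig3: "cis t * cis (-t) = 1"
  by (simp add: cis_mult)

lemma trig4: "cis (-(pi/4)) * cis t = cis (-(pi/4 - t))"
  by (simp add: cis_mult)

lemma trig5: "\<i> * cis (-(pi/4)) * cis (-t) = cis (pi/4 - t)"
proof -
  have "\<i> * cis (-(pi/4)) * cis (-t) = cis (pi/2) * cis (-(pi/4)) * cis (-t)" by simp
  also have "\<dots> = cis (pi/4 - t)" by (simp only: cis_mult, rule arg_cong[where f=cis], simp)
  finally show ?thesis .
qed

lemma trig6: "cis (pi/4) * cis (-(pi/4)) = 1"
  by (simp add: cis_mult)

lemma cmod_sq_lin: "(cmod (complex_of_real x - 2 * complex_of_real y * cis u))\<^sup>2 = x\<^sup>2 - 4*x*y*cos u + 4*y\<^sup>2"
proof -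
  have "(cmod (complex_of_real x - 2 * complex_of_real y * cis u))\<^sup>2 = (x - 2 * y * cos u)\<^sup>2 + (2 * y * sin u)\<^sup>2"
    by (simp add: cmod_power2)
  also have e: "(2 * y * sin u)\<^sup>2 = 4 * y\<^sup>2 * (1 - (cos u)\<^sup>2)"
    by (simp add: power_mult_distrib sin_squared_eq)
  also have "(x - 2 * y * cos u)\<^sup>2 + 4 * y\<^sup>2 * (1 - (cos u)\<^sup>2) = x\<^sup>2 - 4*x*y*cos u + 4*y\<^sup>2"
    by (simp add: power2_eq_square algebra_simps)
  finally show ?thesis .
qed

theorem proposition1:
  fixes q d :: nat and H :: "complex mat" and lam :: "nat \<Rightarrow> real"
    and ev :: "nat \<Rightarrow> complex vec" and \<alpha> :: "complex vec"
  assumes q: "q \<ge> 1" and d: "d = 2 ^ q"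
    and H: "H \<in> carrier_mat d d" "hermitian H"
    and ev_dim: "\<And>j. j < d \<Longrightarrow> ev j \<in> carrier_vec d"
    and ev_eig: "\<And>j. j < d \<Longrightarrow> H *\<^sub>v ev j = of_real (lam j) \<cdot>\<^sub>v ev j"
    and ev_on: "\<And>i j. i < d \<Longrightarrow> j < d \<Longrightarrow> braket (ev i) (ev j) = (if i = j then 1 else 0)"
    and lam0: "0 < lam 0" and lam01: "lam 0 < lam 1"
    and lam_mono: "\<And>j. 1 \<le> j \<Longrightarrow> Suc j < d \<Longrightarrow> lam j \<le> lam (Suc j)"
    and lam_le1: "lam (d - 1) \<le> 1"
    and \<alpha>: "\<alpha> \<in> carrier_vec d" "vnorm \<alpha> = 1"
  assumes om: "\<omega> = pi / 4"
    and U_def: "U = kron_mat (outer (ket 0) (ket 0)) (mexp ((\<i> * of_real \<omega>) \<cdot>\<^sub>m H))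
             + \<i> \<cdot>\<^sub>m kron_mat (outer (ket 1) (ket 1)) (mexp ((- \<i> * of_real \<omega>) \<cdot>\<^sub>m H))"
    and "\<gamma> = (\<lambda>j. braket (ev j) \<alpha>)"
    and "ketp = (1 / of_real (sqrt 2)) \<cdot>\<^sub>v (ket 0 + ket 1)"
    and "\<Psi> = kron_vec ketp \<alpha>"
    and "R = 1\<^sub>m (2 * d) - 2 \<cdot>\<^sub>m outer \<Psi> \<Psi>"
    and "T = R * U * R * adj U"
    and "p = (\<lambda>k. (vnorm (partial_bra k d (T *\<^sub>v \<Psi>)))\<^sup>2)"
    and "\<phi> = (\<lambda>k. (1 / of_real (sqrt (p k))) \<cdot>\<^sub>v partial_bra k d (T *\<^sub>v \<Psi>))"
    and "\<Gamma> = (\<lambda>\<psi>. (cmod (braket (ev 0) \<psi>))\<^sup>2)"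
    and "W = braket \<Psi> (U *\<^sub>v \<Psi>)"
    and "lt = (\<lambda>j. pi / 4 * (1 - lam j))"
    and "chi = 4 * (cmod W)\<^sup>2 - 1"
    and "\<xi> = (\<lambda>j. cmod W - cos (lt j))"
    and "cstar = 4 * cos (lt 0) * (4 * (cos (lt 0))\<^sup>2 - 1) * (cos (lt 1) - cos (lt 0))"
  shows "W = of_real (cmod W) * exp (\<i> * of_real (pi / 4))
    \<and> cmod W = (\<Sum>j<d. (cmod (\<gamma> j))\<^sup>2 * cos (lt j))
    \<and> cstar > 0
    \<and> (0 < \<Gamma> \<alpha> \<and> \<Gamma> \<alpha> < 1 \<longrightarrow>
        (\<forall>k\<in>{0, 1}.
           \<Gamma> (\<phi> k) - \<Gamma> \<alpha> = 4 * cmod W * chi * \<xi> 0 * (cmod (\<gamma> 0))\<^sup>2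
         \<and> 4 * cmod W * chi * \<xi> 0 * (cmod (\<gamma> 0))\<^sup>2 \<ge> cstar * \<Gamma> \<alpha> * (1 - \<Gamma> \<alpha>)
         \<and> cstar * \<Gamma> \<alpha> * (1 - \<Gamma> \<alpha>) > 0))"
proof -
  have \<gamma>d: "\<gamma> = (\<lambda>j. braket (ev j) \<alpha>)" by fact
  have kd: "ketp = (1 / of_real (sqrt 2)) \<cdot>\<^sub>v (ket 0 + ket 1)" by fact
  have Psid: "\<Psi> = kron_vec ketp \<alpha>" by fact
  have Rd: "R = 1\<^sub>m (2 * d) - 2 \<cdot>\<^sub>m outer \<Psi> \<Psi>" by fact
  have Td: "T = R * U * R * adj U" by fact
  have pd: "p = (\<lambda>k. (vnorm (partial_bra k d (T *\<^sub>v \<Psi>)))\<^sup>2)" by fact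
  have phid: "\<phi> = (\<lambda>k. (1 / of_real (sqrt (p k))) \<cdot>\<^sub>v partial_bra k d (T *\<^sub>v \<Psi>))" by fact
  have Gd: "\<Gamma> = (\<lambda>\<psi>. (cmod (braket (ev 0) \<psi>))\<^sup>2)" by fact
  have Wd: "W = braket \<Psi> (U *\<^sub>v \<Psi>)" by fact
  have ltd: "lt = (\<lambda>j. pi / 4 * (1 - lam j))" by fact
  have chid: "chi = 4 * (cmod W)\<^sup>2 - 1" by fact
  have xid: "\<xi> = (\<lambda>j. cmod W - cos (lt j))" by fact
  have csd: "cstar = 4 * cos (lt 0) * (4 * (cos (lt 0))\<^sup>2 - 1) * (cos (lt 1) - cos (lt 0))" by fact
  have d2: "2 \<le> d"
  proof -
    have "(2::nat) ^ 1 \<le> 2 ^ q" using q by (rule power_increasing) simp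
    thus ?thesis using d by simp
  qed
  interpret E: eigsys d H lam ev
    by unfold_locales (use H ev_dim ev_eig ev_on in auto)
  have mono: "lam i \<le> lam j" if i1: "1 \<le> i" and ij: "i \<le> j" and jd: "j < d" for i j
  proof -
    have "j < d \<longrightarrow> i \<le> j \<longrightarrow> lam i \<le> lam j" for j
    proof (induction j)
      case 0
      then show ?case using i1 by simp
    next
      case (Suc j)
      show ?case
      proof (intro impI)
        assume a1: "Suc j < d" and a2: "i \<le> Suc j"
        show "lam i \<le> lam (Suc j)"
        proof (cases "i = Suc j")
          case True
          then show ?thesis by simp
        next
          case False
          hence ij': "i \<le> j" using a2 by simp
          hence "lam i \<le> lam j" using Suc.IH a1 by simp
          also have "lam j \<le> lam (Suc j)" using lam_mono[of j] a1 ij' i1 by simp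
          finally show ?thesis .
        qed
      qed
    qed
    thus ?thesis using ij jd by simp
  qed
  have "lam 1 \<le> lam (d - 1)" using d2 by (intro mono) auto
  hence lam1d: "lam 1 \<le> 1" using lam_le1 by simp
  have lam_ge0: "lam 0 \<le> lam j" if "j < d" for j
  proof (cases "j = 0")
    case False
    hence "lam 1 \<le> lam j" using that by (intro mono) auto
    thus ?thesis using lam01 by simp
  qed simp
  have lam_ge1: "lam 1 \<le> lam j" if "1 \<le> j" "j < d" for j
    using that by (intro mono) auto
  have lam_le: "lam j \<le> 1" if "j < d" for j
  proof (cases "j = 0")
    case True
    thus ?thesis using lam01 lam1d by simp
  next
    case False
    hence "lam j \<le> lam (d - 1)" using that by (intro mono) auto
    thus ?thesis using lam_le1 by simp
  qed
  have lam_pos: "0 < lam j" if "j < d" for j using lam_ge0[OF that] lam0 by simp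
  have lt_ge: "0 \<le> lt j" if "j < d" for j using lam_le[OF that] by (simp add: ltd)
  have lt_lt: "lt j < pi / 4" if "j < d" for j using lam_pos[OF that] by (simp add: ltd)
  have c_pos: "0 < cos (lt j)" if "j < d" for j
    using lt_ge[OF that] lt_lt[OF that] by (intro cos_gt_zero_pi) (auto simp: pi_gt_zero)
  have lt_mono: "lt j \<le> lt i" if "lam i \<le> lam j" for i j
  proof -
    have "pi / 4 * (1 - lam j) \<le> pi / 4 * (1 - lam i)" using that pi_gt_zero by (intro mult_left_mono) auto
    thus ?thesis by (simp add: ltd)
  qed
  have lt0pi: "lt j \<le> pi" if "j < d" for j using lt_lt[OF that] pi_gt_zero by linarith
  have c_ge0: "cos (lt 0) \<le> cos (lt j)" if "j < d" for j
    using lt_ge[OF that] lt_mono[OF lam_ge0[OF that]] lt0pi[of 0] d2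
    by (intro cos_monotone_0_pi_le) auto
  have c_ge1: "cos (lt 1) \<le> cos (lt j)" if "1 \<le> j" "j < d" for j
    using lt_ge[OF that(2)] lt_mono[OF lam_ge1[OF that]] lt0pi[of 1] d2
    by (intro cos_monotone_0_pi_le) auto
  have c01: "cos (lt 0) < cos (lt 1)"
  proof -
    have "lt 1 < lt 0" using lam01 pi_gt_zero by (simp add: ltd)
    thus ?thesis using lt_ge[of 1] lt0pi[of 0] d2 by (intro cos_monotone_0_pi) auto
  qed
  have c0h: "1 / 2 < cos (lt 0)"
  proof -
    have "cos (pi / 4) < cos (lt 0)"
      using lt_ge[of 0] lt_lt[of 0] d2 pi_gt_zero by (intro cos_monotone_0_pi) auto
    moreover have "1 < sqrt (2::real)" by simp
    moreover have "cos (pi / 4) = sqrt 2 / 2" by (rule cos_45)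
    ultimately show ?thesis by linarith
  qed
  have c0sq: "0 < 4 * (cos (lt 0))\<^sup>2 - 1"
  proof -
    have "(1/2)\<^sup>2 < (cos (lt 0))\<^sup>2" using c0h by (intro power_strict_mono) auto
    thus ?thesis by (simp add: power2_eq_square)
  qed
  have cstar_pos: "cstar > 0"
    unfolding csd using c0h c0sq c01 by (intro mult_pos_pos) auto
  define n where "n = (\<lambda>j. (cmod (\<gamma> j))\<^sup>2)"
  have n_nn: "0 \<le> n j" for j by (simp add: n_def)
  have Nsum: "(\<Sum>j<d. n j) = 1"
    using E.vnorm_sq[OF \<alpha>(1)] \<alpha>(2) by (simp add: n_def \<gamma>d)
  define C where "C = (\<Sum>j<d. n j * cos (lt j))"
  have C_nn: "0 \<le> C" unfolding C_def using c_pos n_nn by (intro sum_nonneg) (simp add: less_imp_le)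
  define s :: complex where "s = 1 / of_real (sqrt 2)"
  define g where "g = (\<lambda>j. s * \<gamma> j)"
  have \<alpha>vc: "\<alpha> = E.vc \<gamma>" using E.vc_expand[OF \<alpha>(1)] \<gamma>d by simp
  have Psist: "\<Psi> = stack d (E.vc g) (E.vc g)"
    unfolding Psid kd kron_ketp[OF \<alpha>(1)] using E.vc_smult[of s \<gamma>] \<alpha>vc by (simp add: s_def g_def)
  define c1 where "c1 = \<i> * complex_of_real \<omega>"
  define c2 where "c2 = - \<i> * complex_of_real \<omega>"
  define a where "a = (\<lambda>j. exp (c1 * of_real (lam j)))"
  define b where "b = (\<lambda>j. exp (c2 * of_real (lam j)))"
  define w where "w = (\<Sum>j<d. cnj (g j) * (b j * g j)) + (\<Sum>j<d. cnj (g j) * (-\<i> * (a j * g j)))"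
  define f1 where "f1 = (\<lambda>j. b j * g j - 2 * w * g j)"
  define f2 where "f2 = (\<lambda>j. -\<i> * (a j * g j) - 2 * w * g j)"
  define \<beta> where "\<beta> = (\<Sum>j<d. cnj (g j) * (a j * f1 j)) + (\<Sum>j<d. cnj (g j) * (\<i> * (b j * f2 j)))"
  have U': "U = kron_mat (outer (ket 0) (ket 0)) (mexp (c1 \<cdot>\<^sub>m H)) + \<i> \<cdot>\<^sub>m kron_mat (outer (ket 1) (ket 1)) (mexp (c2 \<cdot>\<^sub>m H))"
    using U_def by (simp add: c1_def c2_def)
  have c12: "c2 = cnj c1" by (simp add: c1_def c2_def)
  note MV = E.main_vec[OF U' c12 Psist Rd Td a_def b_def w_def f1_def f2_def \<beta>_def]
  define \<theta> where "\<theta> = (\<lambda>j. pi / 4 * lam j)"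
  have aj: "a j = cis (\<theta> j)" for j by (simp add: a_def c1_def \<theta>_def om cis_conv_exp mult.assoc)
  have bj: "b j = cis (- \<theta> j)" for j by (simp add: b_def c2_def \<theta>_def om cis_conv_exp mult.assoc)
  have lt\<theta>: "lt j = pi / 4 - \<theta> j" for j by (simp add: ltd \<theta>_def right_diff_distrib)
  have ab: "a j * b j = 1" for j by (simp add: aj bj trig3)
  have gg: "cnj (g j) * g j = of_real (n j / 2)" for j
  proof -
    have "complex_of_real ((cmod (g j))\<^sup>2) = g j * cnj (g j)" by (rule complex_norm_square)
    moreover have "(cmod (g j))\<^sup>2 = n j / 2"
      by (simp add: g_def s_def n_def norm_mult power_mult_distrib norm_divide power_divide)
    ultimately show ?thesis by (simp add: mult.commute)
  qed
  have cmg: "(cmod (g j))\<^sup>2 = n j / 2" for j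
    by (simp add: g_def s_def n_def norm_mult power_mult_distrib norm_divide power_divide)
  have W_eq: "W = cis (pi / 4) * of_real C"
  proof -
    have "W = (\<Sum>j<d. cnj (g j) * (a j * g j) + cnj (g j) * (\<i> * (b j * g j)))"
      using MV(1) Wd by (simp add: sum.distrib)
    also have "\<dots> = (\<Sum>j<d. cis (pi / 4) * of_real (n j * cos (lt j)))"
    proof (intro sum.cong refl)
      fix j
      have "cnj (g j) * (a j * g j) + cnj (g j) * (\<i> * (b j * g j)) = (cnj (g j) * g j) * (a j + \<i> * b j)"
        by (simp add: algebra_simps)
      also have "\<dots> = of_real (n j / 2) * (2 * cis (pi / 4) * of_real (cos (lt j)))"
        by (simp add: gg aj bj trig1 lt\<theta>)
      also have "\<dots> = cis (pi / 4) * of_real (n j * cos (lt j))" by simp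
      finally show "cnj (g j) * (a j * g j) + cnj (g j) * (\<i> * (b j * g j)) = cis (pi / 4) * of_real (n j * cos (lt j))" .
    qed
    also have "\<dots> = cis (pi / 4) * of_real C" by (simp add: C_def sum_distrib_left)
    finally show ?thesis .
  qed
  have w_eq: "w = cis (-(pi / 4)) * of_real C"
  proof -
    have "w = (\<Sum>j<d. cnj (g j) * (b j * g j) + cnj (g j) * (-\<i> * (a j * g j)))"
      unfolding w_def by (rule sum.distrib[symmetric])
    also have "\<dots> = (\<Sum>j<d. cis (-(pi / 4)) * of_real (n j * cos (lt j)))"
    proof (intro sum.cong refl)
      fix j
      have "cnj (g j) * (b j * g j) + cnj (g j) * (-\<i> * (a j * g j)) = (cnj (g j) * g j) * (b j - \<i> * a j)"
        by (simp add: algebra_simps)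
      also have "\<dots> = of_real (n j / 2) * (2 * cis (-(pi / 4)) * of_real (cos (lt j)))"
        by (simp add: gg aj bj trig2 lt\<theta>)
      also have "\<dots> = cis (-(pi / 4)) * of_real (n j * cos (lt j))" by simp
      finally show "cnj (g j) * (b j * g j) + cnj (g j) * (-\<i> * (a j * g j)) = cis (-(pi / 4)) * of_real (n j * cos (lt j))" .
    qed
    also have "\<dots> = cis (-(pi / 4)) * of_real C" by (simp add: C_def sum_distrib_left)
    finally show ?thesis .
  qed
  have i2: "\<i> * \<i> = (-1::complex)" by simp
  have wa: "w * a j = of_real C * cis (-(lt j))" for j
  proof -
    have "w * a j = of_real C * (cis (-(pi / 4)) * cis (\<theta> j))" by (simp add: w_eq aj mult_ac)
    thus ?thesis by (simp add: trig4 lt\<theta>)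
  qed
  have wb: "\<i> * w * b j = of_real C * cis (lt j)" for j
  proof -
    have "\<i> * w * b j = of_real C * (\<i> * cis (-(pi / 4)) * cis (- \<theta> j))" by (simp add: w_eq bj mult_ac)
    thus ?thesis by (simp add: trig5 lt\<theta>)
  qed
  have wab: "w * (a j + \<i> * b j) = 2 * of_real (C * cos (lt j))" for j
  proof -
    have "w * (a j + \<i> * b j) = of_real C * (cis (-(pi / 4)) * cis (pi / 4)) * (2 * of_real (cos (lt j)))"
      by (simp add: w_eq aj bj trig1 lt\<theta> mult_ac)
    thus ?thesis by (simp add: trig6 mult.commute)
  qed
  have beta_eq: "\<beta> = of_real (1 - 2 * C\<^sup>2)"
  proof -
    have "\<beta> = (\<Sum>j<d. cnj (g j) * (a j * f1 j) + cnj (g j) * (\<i> * (b j * f2 j)))"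
      unfolding \<beta>_def by (rule sum.distrib[symmetric])
    also have "\<dots> = (\<Sum>j<d. of_real (n j - 2 * C * (n j * cos (lt j))))"
    proof (intro sum.cong refl)
      fix j
      have "cnj (g j) * (a j * f1 j) + cnj (g j) * (\<i> * (b j * f2 j))
          = (cnj (g j) * g j) * (2 * (a j * b j) - 2 * (w * (a j + \<i> * b j)))"
        unfolding f1_def f2_def by (simp add: algebra_simps)
      also have "\<dots> = of_real (n j - 2 * C * (n j * cos (lt j)))"
        by (simp only: gg ab wab) (simp add: field_simps)
      finally show "cnj (g j) * (a j * f1 j) + cnj (g j) * (\<i> * (b j * f2 j)) = of_real (n j - 2 * C * (n j * cos (lt j)))" .
    qed
    also have "\<dots> = of_real ((\<Sum>j<d. n j) - 2 * C * C)"
      by (simp add: sum_subtractf sum_distrib_left C_def)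
    also have "\<dots> = of_real (1 - 2 * C\<^sup>2)" by (simp add: Nsum power2_eq_square)
    finally show ?thesis .
  qed
  have cW: "cmod W = C" using C_nn by (simp add: W_eq norm_mult)
  have chiC: "chi = 4 * C\<^sup>2 - 1" by (simp add: chid cW)
  have F0: "a j * f1 j - 2 * \<beta> * g j = g j * (of_real chi - 2 * of_real C * cis (-(lt j)))" for j
  proof -
    have "a j * f1 j - 2 * \<beta> * g j = g j * (a j * b j - 2 * (w * a j) - 2 * \<beta>)"
      unfolding f1_def by (simp add: algebra_simps)
    also have "\<dots> = g j * (of_real chi - 2 * of_real C * cis (-(lt j)))"
      by (simp add: ab wa beta_eq chiC algebra_simps)
    finally show ?thesis .
  qed
  have F1: "\<i> * (b j * f2 j) - 2 * \<beta> * g j = g j * (of_real chi - 2 * of_real C * cis (lt j))" for j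
  proof -
    have "\<i> * (b j * f2 j) - 2 * \<beta> * g j = g j * (a j * b j - 2 * (\<i> * w * b j) - 2 * \<beta>)"
      unfolding f2_def by (simp add: algebra_simps)
    also have "\<dots> = g j * (of_real chi - 2 * of_real C * cis (lt j))"
      by (simp only: ab wb beta_eq chiC) (simp add: algebra_simps)
    finally show ?thesis .
  qed
  have gen: "(vnorm y)\<^sup>2 = 1 / 2 \<and>
     (cmod (braket (ev 0) ((1 / of_real (sqrt ((vnorm y)\<^sup>2))) \<cdot>\<^sub>v y)))\<^sup>2
        = n 0 * (chi\<^sup>2 - 4 * chi * C * cos (lt 0) + 4 * C\<^sup>2)"
    if uc: "\<And>j. j < d \<Longrightarrow> cos (u j) = cos (lt j)"
    and yd: "y = E.vc (\<lambda>j. g j * (of_real chi - 2 * of_real C * cis (u j)))" for u y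
  proof -
    define F where "F = (\<lambda>j. g j * (of_real chi - 2 * of_real C * cis (u j)))"
    have cm: "(cmod (F j))\<^sup>2 = n j / 2 * (chi\<^sup>2 - 4 * chi * C * cos (lt j) + 4 * C\<^sup>2)" if "j < d" for j
      using uc[OF that] by (simp add: F_def norm_mult power_mult_distrib cmg cmod_sq_lin)
    have "(vnorm y)\<^sup>2 = (\<Sum>j<d. (cmod (braket (ev j) y))\<^sup>2)"
      by (rule E.vnorm_sq) (simp add: yd)
    also have "\<dots> = (\<Sum>j<d. n j / 2 * (chi\<^sup>2 - 4 * chi * C * cos (lt j) + 4 * C\<^sup>2))"
      by (intro sum.cong refl) (simp add: yd E.co_vc F_def[symmetric] cm)
    also have "\<dots> = (\<Sum>j<d. (chi\<^sup>2 + 4 * C\<^sup>2) / 2 * n j - 2 * chi * C * (n j * cos (lt j)))"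
      by (intro sum.cong refl) (simp add: algebra_simps)
    also have "\<dots> = (chi\<^sup>2 + 4 * C\<^sup>2) / 2 * (\<Sum>j<d. n j) - 2 * chi * C * C"
      by (simp add: sum_subtractf sum_distrib_left C_def)
    also have "\<dots> = 1 / 2" by (simp add: Nsum chiC power2_eq_square field_simps)
    finally have vn: "(vnorm y)\<^sup>2 = 1 / 2" .
    have d0: "0 < d" using d2 by simp
    have "braket (ev 0) ((1 / of_real (sqrt ((vnorm y)\<^sup>2))) \<cdot>\<^sub>v y) = (1 / of_real (sqrt (1 / 2))) * F 0"
      using d0 by (simp only: vn) (simp add: yd E.vc_smult E.co_vc F_def)
    hence "(cmod (braket (ev 0) ((1 / of_real (sqrt ((vnorm y)\<^sup>2))) \<cdot>\<^sub>v y)))\<^sup>2 = 2 * (cmod (F 0))\<^sup>2"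
      by (simp add: norm_mult norm_divide power_mult_distrib power_divide)
    also have "\<dots> = n 0 * (chi\<^sup>2 - 4 * chi * C * cos (lt 0) + 4 * C\<^sup>2)" using cm[OF d0] by simp
    finally have G: "(cmod (braket (ev 0) ((1 / of_real (sqrt ((vnorm y)\<^sup>2))) \<cdot>\<^sub>v y)))\<^sup>2
        = n 0 * (chi\<^sup>2 - 4 * chi * C * cos (lt 0) + 4 * C\<^sup>2)" .
    show ?thesis using vn G by (rule conjI)
  qed
  have y0: "partial_bra 0 d (T *\<^sub>v \<Psi>) = E.vc (\<lambda>j. g j * (of_real chi - 2 * of_real C * cis (-(lt j))))"
    using MV(2) F0 by simp
  have y1: "partial_bra 1 d (T *\<^sub>v \<Psi>) = E.vc (\<lambda>j. g j * (of_real chi - 2 * of_real C * cis (lt j)))"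
    using MV(3) F1 by simp
  have Gphi: "\<Gamma> (\<phi> k) = n 0 * (chi\<^sup>2 - 4 * chi * C * cos (lt 0) + 4 * C\<^sup>2)" if k: "k \<in> {0, 1}" for k
  proof (cases "k = 0")
    case True
    have "\<Gamma> (\<phi> k) = (cmod (braket (ev 0) ((1 / of_real (sqrt ((vnorm (partial_bra 0 d (T *\<^sub>v \<Psi>)))\<^sup>2))) \<cdot>\<^sub>v partial_bra 0 d (T *\<^sub>v \<Psi>))))\<^sup>2"
      using True by (simp add: Gd phid pd)
    also have "\<dots> = n 0 * (chi\<^sup>2 - 4 * chi * C * cos (lt 0) + 4 * C\<^sup>2)"
      using gen[of "\<lambda>j. -(lt j)", OF _ y0] by simp
    finally show ?thesis .
  next
    case False
    hence k1: "k = 1" using k by simp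
    have "\<Gamma> (\<phi> k) = (cmod (braket (ev 0) ((1 / of_real (sqrt ((vnorm (partial_bra 1 d (T *\<^sub>v \<Psi>)))\<^sup>2))) \<cdot>\<^sub>v partial_bra 1 d (T *\<^sub>v \<Psi>))))\<^sup>2"
      using k1 by (simp add: Gd phid pd)
    also have "\<dots> = n 0 * (chi\<^sup>2 - 4 * chi * C * cos (lt 0) + 4 * C\<^sup>2)"
      using gen[of "\<lambda>j. lt j", OF _ y1] by simp
    finally show ?thesis .
  qed
  have Ga: "\<Gamma> \<alpha> = n 0" by (simp add: Gd n_def \<gamma>d)
  have g0: "(cmod (\<gamma> 0))\<^sup>2 = n 0" by (simp add: n_def)
  have xi0: "\<xi> 0 = C - cos (lt 0)" by (simp add: xid cW)
  have xi_lb: "C - cos (lt 0) \<ge> (1 - n 0) * (cos (lt 1) - cos (lt 0))"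
  proof -
    have "C - cos (lt 0) = (\<Sum>j<d. n j * (cos (lt j) - cos (lt 0)))"
      by (simp add: C_def algebra_simps sum_subtractf sum_distrib_right[symmetric] Nsum)
    also have "\<dots> \<ge> (\<Sum>j<d. n j * (cos (lt 1) - cos (lt 0)) - (if j = 0 then n 0 * (cos (lt 1) - cos (lt 0)) else 0))"
    proof (intro sum_mono)
      fix j assume "j \<in> {..<d}"
      hence j: "j < d" by simp
      show "n j * (cos (lt 1) - cos (lt 0)) - (if j = 0 then n 0 * (cos (lt 1) - cos (lt 0)) else 0)
            \<le> n j * (cos (lt j) - cos (lt 0))"
      proof (cases "j = 0")
        case False
        hence "cos (lt 1) \<le> cos (lt j)" using c_ge1[of j] j by simp
        thus ?thesis using False n_nn[of j] by (simp add: mult_left_mono)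
      qed simp
    qed
    also have "(\<Sum>j<d. n j * (cos (lt 1) - cos (lt 0)) - (if j = 0 then n 0 * (cos (lt 1) - cos (lt 0)) else 0))
        = (1 - n 0) * (cos (lt 1) - cos (lt 0))"
    proof -
      have s1: "(\<Sum>j<d. n j * (cos (lt 1) - cos (lt 0))) = cos (lt 1) - cos (lt 0)"
        using Nsum by (simp add: sum_distrib_right[symmetric])
      have s2: "(\<Sum>j<d. (if j = 0 then n 0 * (cos (lt 1) - cos (lt 0)) else 0)) = n 0 * (cos (lt 1) - cos (lt 0))"
        using d2 by simp
      have "(\<Sum>j<d. n j * (cos (lt 1) - cos (lt 0)) - (if j = 0 then n 0 * (cos (lt 1) - cos (lt 0)) else 0))
          = (cos (lt 1) - cos (lt 0)) - n 0 * (cos (lt 1) - cos (lt 0))"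
        by (simp only: sum_subtractf s1 s2)
      thus ?thesis by (simp add: algebra_simps)
    qed
    finally show ?thesis .
  qed
  show ?thesis
  proof (intro conjI impI ballI)
    have "of_real (cmod W) * exp (\<i> * of_real (pi / 4)) = of_real C * cis (pi / 4)"
      by (simp only: cW cis_conv_exp)
    thus "W = of_real (cmod W) * exp (\<i> * of_real (pi / 4))"
      using W_eq by (simp add: mult.commute)
    show "cmod W = (\<Sum>j<d. (cmod (\<gamma> j))\<^sup>2 * cos (lt j))"
      by (simp add: cW C_def n_def)
    show "cstar > 0" by (rule cstar_pos)
    assume G: "0 < \<Gamma> \<alpha> \<and> \<Gamma> \<alpha> < 1"
    hence n0: "0 < n 0" "n 0 < 1" using Ga by auto
    fix k :: nat assume k: "k \<in> {0, 1}"
    show "\<Gamma> (\<phi> k) - \<Gamma> \<alpha> = 4 * cmod W * chi * \<xi> 0 * (cmod (\<gamma> 0))\<^sup>2"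
      unfolding Gphi[OF k] Ga g0 xi0 cW chiC by (simp add: power2_eq_square algebra_simps)
    have xlb: "(1 - n 0) * (cos (lt 1) - cos (lt 0)) \<ge> 0" using n0 c01 by simp
    have Cge: "C \<ge> cos (lt 0)" using xi_lb xlb by simp
    have chige: "4 * (cos (lt 0))\<^sup>2 - 1 \<le> 4 * C\<^sup>2 - 1"
      using Cge c_pos[of 0] d2 by (simp add: power_mono)
    have "4 * cos (lt 0) * (4 * (cos (lt 0))\<^sup>2 - 1) * ((1 - n 0) * (cos (lt 1) - cos (lt 0)))
          \<le> 4 * C * (4 * C\<^sup>2 - 1) * (C - cos (lt 0))"
    proof -
      have h1: "4 * cos (lt 0) * (4 * (cos (lt 0))\<^sup>2 - 1) \<le> 4 * C * (4 * C\<^sup>2 - 1)"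
        by (rule mult_mono) (use Cge chige C_nn c0sq c_pos[of 0] d2 in auto)
      show ?thesis
        by (rule mult_mono[OF h1 xi_lb]) (use C_nn chige c0sq xlb in auto)
    qed
    hence "4 * cos (lt 0) * (4 * (cos (lt 0))\<^sup>2 - 1) * ((1 - n 0) * (cos (lt 1) - cos (lt 0))) * n 0
          \<le> 4 * C * (4 * C\<^sup>2 - 1) * (C - cos (lt 0)) * n 0"
      using n0 by (intro mult_right_mono) auto
    thus "4 * cmod W * chi * \<xi> 0 * (cmod (\<gamma> 0))\<^sup>2 \<ge> cstar * \<Gamma> \<alpha> * (1 - \<Gamma> \<alpha>)"
      unfolding Ga g0 xi0 cW chiC csd by (simp add: algebra_simps)
    show "cstar * \<Gamma> \<alpha> * (1 - \<Gamma> \<alpha>) > 0"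
      using cstar_pos n0 Ga by simp
  qed
qed

end
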